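(* For fixed $\theta\in[0,\pi]$, let $\mathcal{E}(\theta)$ be the qubit ensemble of pure states $\cos(\theta/2)|0\rangle+s\sin(\theta/2)e^{i\varphi}|1\rangle$, where the sign $s\in\{+1,-1\}$ is chosen with probability $1/2$ each and $\varphi$ is uniformly distributed on $[0,2\pi)$. Then $$J(\mathcal{E}(\theta))=\begin{cases}1-\tfrac12\sin^2\theta, & 0\le\sin\theta\le\sqrt{2/3},\\[2pt] \tfrac12+\tfrac14\sin^2\theta, & \sqrt{2/3}<\sin\theta\le1.\end{cases}$$ In particular the minimum of $J(\mathcal{E}(\theta))$ over $\theta$ is $2/3$, attained when $\sin\theta=\sqrt{2/3}$, and $J(\mathcal{E}(\pi/2))=3/4$.
   Context: Fidelity: $F(\rho,\sigma)=\big(\mathrm{tr}\sqrt{\rho^{1/2}\sigma\rho^{1/2}}\big)^2$. For an orthonormal basis $\{|j\rangle\}$ of $\mathbb{C}^2$ and state $\rho$, $\rho'=\sum_j\langle j|\rho|j\rangle|j\rangle\langle j|$. The ECCC of an ensemble given by a probability measure $\mu$ on states is $J=\max_{\{|j\rangle\}}\int F(\rho,\rho')\,d\mu(\rho)$, maximum over all orthonormal bases of $\mathbb{C}^2$. *)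

theory Defs
  imports "HOL-Analysis.Analysis" "HOL-Probability.Probability"
begin

type_synonym qvec = "complex ^ 2"
type_synonym qmat = "complex ^ 2 ^ 2"

definition mtrace :: "qmat \<Rightarrow> complex" where
  "mtrace A = (\<Sum>i\<in>UNIV. A $ i $ i)"

definition psd :: "qmat \<Rightarrow> bool" where
  "psd A \<longleftrightarrow> (\<forall>v::qvec. let q = (\<Sum>i\<in>UNIV. cnj (v $ i) * (A *v v) $ i) in Im q = 0 \<and> Re q \<ge> 0)"

definition msqrt :: "qmat \<Rightarrow> qmat" where
  "msqrt A = (THE X. psd X \<and> X ** X = A)"

definition fidelity :: "qmat \<Rightarrow> qmat \<Rightarrow> real" where
  "fidelity \<rho> \<sigma> = (Re (mtrace (msqrt (msqrt \<rho> ** \<sigma> ** msqrt \<rho>)))) ^ 2"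

definition proj :: "qvec \<Rightarrow> qmat" where
  "proj u = (\<chi> i j. u $ i * cnj (u $ j))"

definition onb :: "(2 \<Rightarrow> qvec) \<Rightarrow> bool" where
  "onb b \<longleftrightarrow> (\<forall>j k. (\<Sum>i\<in>UNIV. cnj (b j $ i) * b k $ i) = (if j = k then 1 else 0))"

definition braket :: "qvec \<Rightarrow> qmat \<Rightarrow> qvec \<Rightarrow> complex" where
  "braket u A w = (\<Sum>i\<in>UNIV. cnj (u $ i) * (A *v w) $ i)"

definition dephase :: "(2 \<Rightarrow> qvec) \<Rightarrow> qmat \<Rightarrow> qmat" where
  "dephase b \<rho> = (\<chi> a c. \<Sum>j\<in>UNIV. braket (b j) \<rho> (b j) * proj (b j) $ a $ c)"

definition ECCC :: "qmat measure \<Rightarrow> real" where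
  "ECCC \<mu> = (SUP b\<in>{b. onb b}. \<integral>\<rho>. fidelity \<rho> (dephase b \<rho>) \<partial>\<mu>)"

definition psi :: "real \<Rightarrow> real \<Rightarrow> real \<Rightarrow> qvec" where
  "psi \<theta> s \<phi> = (\<chi> i. if i = 0 then complex_of_real (cos (\<theta>/2))
                      else complex_of_real (s * sin (\<theta>/2)) * cis \<phi>)"

definition ens :: "real \<Rightarrow> qmat measure" where
  "ens \<theta> = distr (measure_pmf (pmf_of_set {1, -1::real}) \<Otimes>\<^sub>M uniform_measure lborel {0..<2*pi})
                  borel (\<lambda>(s, \<phi>). proj (psi \<theta> s \<phi>))"

end

theory Submission
  imports Defs
begin


lemma trig_nn:
  fixes C0 a b c d :: real
  assumes nn: "\<And>\<phi>. 0 \<le> C0 + a * cos \<phi> + b * sin \<phi> + c * cos (2*\<phi>) + d * sin (2*\<phi>)"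
  shows "(\<integral>\<^sup>+\<phi>. ennreal (C0 + a * cos \<phi> + b * sin \<phi> + c * cos (2*\<phi>) + d * sin (2*\<phi>))
            \<partial>uniform_measure lborel {0..<2*pi}) = ennreal C0"
proof -
  define f where "f = (\<lambda>\<phi>. C0 + a * cos \<phi> + b * sin \<phi> + c * cos (2*\<phi>) + d * sin (2*\<phi>))"
  define F where "F = (\<lambda>\<phi>. C0 * \<phi> + a * sin \<phi> - b * cos \<phi> + c * sin (2*\<phi>) / 2 - d * cos (2*\<phi>) / 2)"
  have fm[measurable]: "f \<in> borel_measurable borel" unfolding f_def
    by (intro borel_measurable_continuous_onI continuous_intros)
  have D: "DERIV F x :> f x" for x
    unfolding F_def f_def by (auto intro!: derivative_eq_intros simp: algebra_simps)
  have "(\<integral>\<^sup>+\<phi>. ennreal (f \<phi>) \<partial>uniform_measure lborel {0..<2*pi})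
      = (\<integral>\<^sup>+\<phi>. ennreal (f \<phi>) * indicator {0..<2*pi} \<phi> \<partial>lborel) / emeasure lborel {0..<2*pi}"
    by (rule nn_integral_uniform_measure) auto
  also have "(\<integral>\<^sup>+\<phi>. ennreal (f \<phi>) * indicator {0..<2*pi} \<phi> \<partial>lborel)
      = (\<integral>\<^sup>+\<phi>. ennreal (f \<phi>) * indicator {0..2*pi} \<phi> \<partial>lborel)"
    by (rule nn_integral_cong_AE) (use AE_lborel_singleton[of "2*pi"] in \<open>auto elim!: eventually_mono split: split_indicator\<close>)
  also have "\<dots> = F (2*pi) - F 0"
    by (rule nn_integral_FTC_Icc) (auto simp: D, simp add: f_def nn)
  also have "F (2*pi) - F 0 = C0 * (2*pi)"
    unfolding F_def by (simp add: sin_double cos_double)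
  also have "emeasure lborel {0..<2*pi} = ennreal (2*pi)" by simp
  finally have eq: "(\<integral>\<^sup>+\<phi>. ennreal (f \<phi>) \<partial>uniform_measure lborel {0..<2*pi}) = ennreal (C0 * (2*pi)) / ennreal (2*pi)" .
  have "ennreal (C0 * (2*pi)) / ennreal (2*pi) = ennreal C0"
  proof (cases "C0 \<ge> 0")
    case True then show ?thesis using pi_gt_zero by (simp add: divide_ennreal)
  next
    case False
    then have "C0 * (2*pi) \<le> 0" using pi_gt_zero by (simp add: mult_nonpos_nonneg)
    then show ?thesis using False by (simp add: ennreal_neg)
  qed
  with eq show ?thesis unfolding f_def by simp
qed



lemma mat_eq2: "(A::'a^2^2) = B \<longleftrightarrow> A$1$1=B$1$1 \<and> A$1$2=B$1$2 \<and> A$2$1=B$2$1 \<and> A$2$2=B$2$2"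
  by (simp add: vec_eq_iff forall_2)

lemma mmul2: "((A::'a::semiring_1^2^2) ** B) $ i $ j = A$i$1 * B$1$j + A$i$2 * B$2$j"
  by (simp add: matrix_matrix_mult_def sum_2)

definition v2 :: "complex \<Rightarrow> complex \<Rightarrow> qvec" where "v2 a b = (\<chi> i. if i = 1 then a else b)"
lemma v2_nth[simp]: "v2 a b $ 1 = a" "v2 a b $ 2 = b" by (simp_all add: v2_def)

definition qf :: "qmat \<Rightarrow> complex \<Rightarrow> complex \<Rightarrow> complex" where
  "qf A a b = cnj a * (A$1$1*a + A$1$2*b) + cnj b * (A$2$1*a + A$2$2*b)"

lemma psd_qf: assumes "psd A" shows "Im (qf A a b) = 0" "Re (qf A a b) \<ge> 0"
proof -
  have "(\<Sum>i\<in>UNIV. cnj (v2 a b $ i) * (A *v v2 a b) $ i) = qf A a b"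
    by (simp add: sum_2 matrix_vector_mult_def qf_def)
  then show "Im (qf A a b) = 0" "Re (qf A a b) \<ge> 0" using assms unfolding psd_def Let_def by metis+
qed

lemma psd_props:
  assumes "psd A"
  shows "Im (A$1$1) = 0" "Re (A$1$1) \<ge> 0" "Im (A$2$2) = 0" "Re (A$2$2) \<ge> 0"
        "A$2$1 = cnj (A$1$2)" "Re (A$1$1) * Re (A$2$2) \<ge> (cmod (A$1$2))^2"
proof -
  define p where "p = A$1$1" define q where "q = A$1$2" define w where "w = A$2$1" define r where "r = A$2$2"
  note qd = qf_def[of A, folded p_def q_def w_def r_def]
  have 1: "Im p = 0" "Re p \<ge> 0" using psd_qf[OF assms, of 1 0] by (simp_all add: qd)
  have 2: "Im r = 0" "Re r \<ge> 0" using psd_qf[OF assms, of 0 1] by (simp_all add: qd)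
  have 3: "Im q + Im w = 0" using psd_qf[OF assms, of 1 1] 1 2 by (simp add: qd)
  have 4: "Re q - Re w = 0" using psd_qf[OF assms, of 1 \<i>] 1 2 by (simp add: qd algebra_simps)
  have wq: "w = cnj q" using 3 4 by (simp add: complex_eq_iff)
  have cq: "(cmod q)^2 = (Re q)^2 + (Im q)^2" by (simp add: cmod_def)
  have 5: "Re p * (Re p * Re r - (cmod q)^2) \<ge> 0"
    using psd_qf(2)[OF assms, of "-q" p] 1 2 wq cq by (simp add: qd algebra_simps power2_eq_square)
  have 6: "Re r * (Re p * Re r - (cmod q)^2) \<ge> 0"
    using psd_qf(2)[OF assms, of r "-w"] 1 2 wq cq by (simp add: qd algebra_simps power2_eq_square)
  have 7: "Re p = 0 \<Longrightarrow> Re r = 0 \<Longrightarrow> (cmod q)^2 \<le> 0"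
    using psd_qf(2)[OF assms, of 1 "-w"] 1 2 wq cq by (simp add: qd algebra_simps power2_eq_square)
  have "Re p * Re r \<ge> (cmod q)^2"
  proof (cases "Re p > 0")
    case True then show ?thesis using 5 by (simp add: zero_le_mult_iff)
  next
    case False
    then have p0: "Re p = 0" using 1 by simp
    show ?thesis
    proof (cases "Re r > 0")
      case True then show ?thesis using 6 by (simp add: zero_le_mult_iff)
    next
      case False then show ?thesis using 7 p0 2 by simp
    qed
  qed
  then show "Im (A$1$1) = 0" "Re (A$1$1) \<ge> 0" "Im (A$2$2) = 0" "Re (A$2$2) \<ge> 0"
        "A$2$1 = cnj (A$1$2)" "Re (A$1$1) * Re (A$2$2) \<ge> (cmod (A$1$2))^2"
    using 1 2 wq by (simp_all add: p_def q_def w_def r_def)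
qed

definition det2 :: "qmat \<Rightarrow> complex" where "det2 A = A$1$1*A$2$2 - A$1$2*A$2$1"
definition sG :: "qmat \<Rightarrow> real" where "sG A = sqrt (Re (det2 A))"
definition tG :: "qmat \<Rightarrow> real" where "tG A = sqrt (Re (A$1$1 + A$2$2) + 2 * sG A)"
definition G :: "qmat \<Rightarrow> qmat" where "G A = inverse (tG A) *\<^sub>R (A + sG A *\<^sub>R mat 1)"

lemma G_nth: "G A $ i $ j = inverse (tG A) *\<^sub>R (A $ i $ j + (if i = j then sG A else 0) *\<^sub>R 1)"
  by (simp add: G_def mat_def)

lemma psd_sqrt_G:
  assumes X: "psd X" and XA: "X ** X = A"
  shows "X = G A"
proof -
  define a where "a = Re (X$1$1)" define d where "d = Re (X$2$2)"
  define b1 where "b1 = Re (X$1$2)" define b2 where "b2 = Im (X$1$2)"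
  note P = psd_props[OF X]
  have x11: "X$1$1 = Complex a 0" using P by (simp add: a_def complex_eq_iff)
  have x22: "X$2$2 = Complex d 0" using P by (simp add: d_def complex_eq_iff)
  have x12: "X$1$2 = Complex b1 b2" by (simp add: b1_def b2_def complex_eq_iff)
  have x21: "X$2$1 = Complex b1 (-b2)" using P by (simp add: b1_def b2_def complex_eq_iff)
  have a0: "a \<ge> 0" "d \<ge> 0" using P by (simp_all add: a_def d_def)
  have D0: "a*d - (b1^2+b2^2) \<ge> 0" using P(6) x12 by (simp add: a_def d_def cmod_def)
  have AX: "A$i$j = X$i$1 * X$1$j + X$i$2 * X$2$j" for i j using XA by (auto simp: mmul2)
  have A11: "A$1$1 = Complex (a^2 + b1^2 + b2^2) 0"
    unfolding AX x11 x12 x21 x22 by (simp add: complex_eq_iff power2_eq_square)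
  have A22: "A$2$2 = Complex (d^2 + b1^2 + b2^2) 0"
    unfolding AX x11 x12 x21 x22 by (simp add: complex_eq_iff power2_eq_square)
  have A12: "A$1$2 = Complex ((a+d)*b1) ((a+d)*b2)"
    unfolding AX x11 x12 x21 x22 by (simp add: complex_eq_iff distrib_right)
  have A21: "A$2$1 = Complex ((a+d)*b1) (-(a+d)*b2)"
    unfolding AX x11 x12 x21 x22 by (simp add: complex_eq_iff algebra_simps)
  define n where "n = b1^2 + b2^2"
  have "Re (det2 A) = (a^2 + n) * (d^2 + n) - (a+d)^2 * n"
    by (simp add: det2_def A11 A12 A21 A22 n_def power2_eq_square algebra_simps)
  also have "\<dots> = (a*d - n)^2" by (simp add: power2_eq_square algebra_simps)
  finally have "Re (det2 A) = (a*d - (b1^2+b2^2))^2" by (simp add: n_def)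
  then have sg: "sG A = a*d - (b1^2+b2^2)" using D0 by (simp add: sG_def)
  have "Re (A$1$1 + A$2$2) + 2 * sG A = (a+d)^2"
    by (simp add: A11 A22 sg power2_eq_square algebra_simps)
  then have tg: "tG A = a + d" using a0 by (simp add: tG_def)
  show ?thesis
  proof (cases "a + d = 0")
    case True
    then have "a = 0" "d = 0" using a0 by auto
    with D0 have "b1^2+b2^2 \<le> 0" by simp
    then have "b1^2 = 0" "b2^2 = 0" using zero_le_power2[of b1] zero_le_power2[of b2] by linarith+
    then have "b1 = 0" "b2 = 0" by simp_all
    with \<open>a=0\<close> \<open>d=0\<close> show ?thesis
      by (simp add: mat_eq2 G_nth tg x11 x12 x21 x22 True Complex_eq_0)
  next
    case False
    then have pos: "a + d > 0" using a0 by simp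
    have ne: "a + d \<noteq> 0" using pos by simp
    have e11: "G A $ 1 $ 1 = X $ 1 $ 1"
    proof -
      have "a^2 + b1^2 + b2^2 + (a*d - (b1^2+b2^2)) = a * (a+d)" by (simp add: algebra_simps power2_eq_square)
      then have "inverse (a+d) * (a^2 + b1^2 + b2^2 + (a*d - (b1^2+b2^2))) = a" using ne by simp
      then show ?thesis by (simp add: G_nth tg sg x11 A11 complex_eq_iff)
    qed
    have e22: "G A $ 2 $ 2 = X $ 2 $ 2"
    proof -
      have "d^2 + b1^2 + b2^2 + (a*d - (b1^2+b2^2)) = d * (a+d)" by (simp add: algebra_simps power2_eq_square)
      then have "inverse (a+d) * (d^2 + b1^2 + b2^2 + (a*d - (b1^2+b2^2))) = d" using ne by simp
      then show ?thesis by (simp add: G_nth tg sg x22 A22 complex_eq_iff)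
    qed
    have e12: "G A $ 1 $ 2 = X $ 1 $ 2"
      using ne by (simp add: G_nth tg x12 A12 complex_eq_iff)
    have e21: "G A $ 2 $ 1 = X $ 2 $ 1"
      using ne by (simp add: G_nth tg x21 A21 complex_eq_iff field_simps)
    show ?thesis using e11 e12 e21 e22 by (simp add: mat_eq2)
  qed
qed

lemma msqrt_eq: assumes "psd X" "X ** X = A" shows "msqrt A = X"
  unfolding msqrt_def
proof (rule the_equality)
  show "psd X \<and> X ** X = A" using assms by simp
next
  fix Y assume "psd Y \<and> Y ** Y = A"
  then have "Y = G A" using psd_sqrt_G by blast
  moreover have "X = G A" using psd_sqrt_G assms by blast
  ultimately show "Y = X" by simp
qed



lemma psd_closed: "closed {A::qmat. psd A}"
proof -
  have "{A::qmat. psd A} = (\<Inter>v. {A. Im (\<Sum>i\<in>UNIV. cnj (v$i) * (A *v v)$i) = 0} \<inter> {A. 0 \<le> Re (\<Sum>i\<in>UNIV. cnj (v$i) * (A *v v)$i)})"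
    by (auto simp: psd_def Let_def)
  also have "closed \<dots>"
    by (intro closed_INT ballI closed_Int closed_Collect_eq closed_Collect_le)
       (simp_all add: matrix_vector_mult_def, (intro continuous_intros)+)
  finally show ?thesis .
qed

lemma cont_mmul: "continuous_on UNIV (\<lambda>x::qmat\<times>qmat. fst x ** fst x - snd x)"
  unfolding matrix_matrix_mult_def by (intro continuous_intros)

lemma G_meas[measurable]: "G \<in> borel_measurable borel"
proof -
  have s[measurable]: "sG \<in> borel_measurable borel" unfolding sG_def[abs_def] det2_def
    by (intro borel_measurable_continuous_onI continuous_intros)
  have t[measurable]: "tG \<in> borel_measurable borel" unfolding tG_def[abs_def] sG_def det2_def
    by (intro borel_measurable_continuous_onI continuous_intros)
  show ?thesis unfolding G_def[abs_def] by measurable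
qed

definition SS :: "qmat set" where "SS = {A. psd (G A) \<and> G A ** G A = A}"

lemma SS_meas: "SS \<in> sets borel"
proof -
  have k: "(\<lambda>A. G A ** G A - A) \<in> borel_measurable borel"
    using borel_measurable_continuous_Pair[OF G_meas measurable_id, of "\<lambda>x y. x ** x - y"] cont_mmul
    by (simp add: case_prod_beta)
  have 1: "G -` {A. psd A} \<inter> space borel \<in> sets borel"
    by (rule measurable_sets[OF G_meas]) (simp add: psd_closed)
  have 2: "(\<lambda>A. G A ** G A - A) -` {0} \<inter> space borel \<in> sets borel"
    by (rule measurable_sets[OF k]) simp
  have "SS = (G -` {A. psd A} \<inter> space borel) \<inter> ((\<lambda>A. G A ** G A - A) -` {0} \<inter> space borel)"
    by (auto simp: SS_def)
  then show ?thesis using sets.Int[OF 1 2] by simp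
qed

lemma msqrt_alt: "msqrt A = (if A \<in> SS then G A else The (\<lambda>X. False))"
proof (cases "A \<in> SS")
  case True then show ?thesis by (simp add: SS_def msqrt_eq)
next
  case False
  then have "(\<lambda>X. psd X \<and> X ** X = A) = (\<lambda>X. False)"
    using psd_sqrt_G unfolding SS_def by fastforce
  then show ?thesis using False by (simp add: msqrt_def)
qed

lemma msqrt_meas[measurable]: "msqrt \<in> borel_measurable borel"
  unfolding msqrt_alt[abs_def]
  by (rule measurable_If_set) (auto simp: SS_meas)



lemma h_meas: "(\<lambda>\<rho>. fidelity \<rho> (dephase b \<rho>)) \<in> borel_measurable borel"
proof -
  have c: "continuous_on UNIV (\<lambda>x::qmat\<times>qmat. fst x ** dephase b (snd x) ** fst x)"
    unfolding matrix_matrix_mult_def dephase_def braket_def matrix_vector_mult_def proj_def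
    by (intro continuous_intros)
  have M: "(\<lambda>\<rho>. msqrt \<rho> ** dephase b \<rho> ** msqrt \<rho>) \<in> borel_measurable borel"
    using borel_measurable_continuous_Pair[OF msqrt_meas measurable_id, of "\<lambda>x y. x ** dephase b y ** x"] c
    by (simp add: case_prod_beta)
  have M2: "(\<lambda>\<rho>. msqrt (msqrt \<rho> ** dephase b \<rho> ** msqrt \<rho>)) \<in> borel_measurable borel"
    using measurable_compose[OF M msqrt_meas] by (simp add: comp_def)
  have tr: "(\<lambda>A. (Re (mtrace A))^2) \<in> borel_measurable borel"
    unfolding mtrace_def by (intro borel_measurable_continuous_onI continuous_intros)
  show ?thesis using measurable_compose[OF M2 tr] by (simp add: fidelity_def comp_def)
qed



definition zz :: "qvec \<Rightarrow> qvec \<Rightarrow> complex" where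
  "zz u \<psi> = cnj (u$1) * \<psi>$1 + cnj (u$2) * \<psi>$2"

definition unit :: "qvec \<Rightarrow> bool" where
  "unit \<psi> \<longleftrightarrow> \<psi>$1 * cnj (\<psi>$1) + \<psi>$2 * cnj (\<psi>$2) = 1"

lemma zz_sq: "zz u \<psi> * cnj (zz u \<psi>) = of_real ((cmod (zz u \<psi>))^2)"
  by (rule complex_norm_square[symmetric])

lemma zz_sq': "cnj (zz u \<psi>) * zz u \<psi> = of_real ((cmod (zz u \<psi>))^2)"
  by (subst mult.commute) (rule complex_norm_square[symmetric])

lemma scC: "c *\<^sub>R (z::complex) = of_real c * z" by (simp add: scaleR_conv_of_real)

lemma psd_proj: assumes "c \<ge> 0" shows "psd (c *\<^sub>R proj \<psi>)"
proof -
  have "(\<Sum>i\<in>UNIV. cnj (v $ i) * ((c *\<^sub>R proj \<psi>) *v v) $ i) = of_real c * (zz v \<psi> * cnj (zz v \<psi>))" for v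
    by (simp add: sum_2 matrix_vector_mult_def proj_def zz_def scC algebra_simps)
  then show ?thesis using assms unfolding psd_def Let_def zz_sq of_real_mult[symmetric]
    by simp
qed

lemma proj_sq: assumes "unit \<psi>" shows "(c *\<^sub>R proj \<psi>) ** (c *\<^sub>R proj \<psi>) = (c^2) *\<^sub>R proj \<psi>"
proof -
  have u: "\<psi>$1 * cnj (\<psi>$1) + \<psi>$2 * cnj (\<psi>$2) = 1" using assms by (simp add: unit_def)
  have "((c *\<^sub>R proj \<psi>) ** (c *\<^sub>R proj \<psi>)) $ i $ j = of_real (c^2) * (\<psi>$i * cnj (\<psi>$j) * (\<psi>$1 * cnj (\<psi>$1) + \<psi>$2 * cnj (\<psi>$2)))" for i j
    by (simp add: mmul2 proj_def scC power2_eq_square algebra_simps)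
  then show ?thesis using u by (simp add: vec_eq_iff proj_def scC)
qed

lemma msqrt_proj: assumes "unit \<psi>" "c \<ge> 0" shows "msqrt ((c^2) *\<^sub>R proj \<psi>) = c *\<^sub>R proj \<psi>"
  by (rule msqrt_eq) (use assms psd_proj proj_sq in auto)

lemma braket_proj: "braket u (proj \<psi>) u = zz u \<psi> * cnj (zz u \<psi>)"
  by (simp add: braket_def sum_2 matrix_vector_mult_def proj_def zz_def algebra_simps)

lemma braket_proj2: "braket \<psi> (proj u) \<psi> = cnj (zz u \<psi>) * zz u \<psi>"
  by (simp add: braket_def sum_2 matrix_vector_mult_def proj_def zz_def algebra_simps)

lemma braket_lin: fixes b :: "2 \<Rightarrow> qvec" shows "braket \<psi> (\<chi> a c. \<Sum>j\<in>UNIV. w j * proj (b j) $ a $ c) \<psi> = (\<Sum>j\<in>UNIV. w j * braket \<psi> (proj (b j)) \<psi>)"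
  unfolding braket_def matrix_vector_mult_def proj_def
  by (simp add: sum_2) (simp add: algebra_simps)

lemma zz_cm: "cmod (zz u v) = cmod (zz v u)"
proof -
  have "zz u v = cnj (zz v u)" by (simp add: zz_def mult.commute)
  then show ?thesis by simp
qed

lemma braket_deph: "braket \<psi> (dephase b (proj \<psi>)) \<psi> = of_real ((cmod (zz (b 1) \<psi>))^2 ^2 + (cmod (zz (b 2) \<psi>))^2 ^2)"
proof -
  have "braket \<psi> (dephase b (proj \<psi>)) \<psi> = (\<Sum>j\<in>UNIV. braket (b j) (proj \<psi>) (b j) * braket \<psi> (proj (b j)) \<psi>)"
    unfolding dephase_def by (rule braket_lin)
  also have "\<dots> = (\<Sum>j\<in>UNIV. of_real (((cmod (zz (b j) \<psi>))^2)^2))"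
  proof (rule sum.cong)
    fix j
    show "braket (b j) (proj \<psi>) (b j) * braket \<psi> (proj (b j)) \<psi> = of_real (((cmod (zz (b j) \<psi>))^2)^2)"
      unfolding braket_proj zz_sq zz_cm[of \<psi> "b j"] by (simp add: power2_eq_square)
  qed simp
  finally show ?thesis by (simp add: sum_2)
qed

lemma sandwich: assumes "braket \<psi> M \<psi> = of_real r" shows "proj \<psi> ** M ** proj \<psi> = r *\<^sub>R proj \<psi>"
proof -
  have "(proj \<psi> ** M ** proj \<psi>) $ i $ j = braket \<psi> M \<psi> * (proj \<psi> $ i $ j)" for i j
    by (simp add: mmul2 braket_def sum_2 matrix_vector_mult_def proj_def algebra_simps)
  then show ?thesis using assms by (simp add: vec_eq_iff scC)
qed

lemma trace_proj: assumes "unit \<psi>" shows "mtrace (c *\<^sub>R proj \<psi>) = of_real c"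
proof -
  have "mtrace (c *\<^sub>R proj \<psi>) = of_real c * (\<psi>$1 * cnj (\<psi>$1) + \<psi>$2 * cnj (\<psi>$2))"
    by (simp add: mtrace_def sum_2 proj_def scC algebra_simps)
  then show ?thesis using assms by (simp add: unit_def)
qed

lemma fid_proj:
  assumes "unit \<psi>"
  shows "fidelity (proj \<psi>) (dephase b (proj \<psi>)) = (cmod (zz (b 1) \<psi>))^2 ^2 + (cmod (zz (b 2) \<psi>))^2 ^2"
proof -
  define r where "r = (cmod (zz (b 1) \<psi>))^2 ^2 + (cmod (zz (b 2) \<psi>))^2 ^2"
  have r0: "r \<ge> 0" unfolding r_def by (intro add_nonneg_nonneg; simp)
  have m1: "msqrt (proj \<psi>) = proj \<psi>" using msqrt_proj[OF assms, of 1] by simp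
  have s: "proj \<psi> ** dephase b (proj \<psi>) ** proj \<psi> = ((sqrt r)^2) *\<^sub>R proj \<psi>"
    using sandwich[OF braket_deph[of \<psi> b, folded r_def]] r0 by simp
  have "msqrt (proj \<psi> ** dephase b (proj \<psi>) ** proj \<psi>) = sqrt r *\<^sub>R proj \<psi>"
    unfolding s by (rule msqrt_proj[OF assms]) (simp add: r0)
  then have "fidelity (proj \<psi>) (dephase b (proj \<psi>)) = (Re (mtrace (sqrt r *\<^sub>R proj \<psi>)))^2"
    by (simp add: fidelity_def m1)
  also have "\<dots> = r" using r0 by (simp add: trace_proj[OF assms])
  finally show ?thesis by (simp add: r_def)
qed



lemma onb_comp:
  assumes "onb b"
  shows "(\<Sum>j\<in>UNIV. cnj (b j $ i) * b j $ k) = (if i = k then 1 else 0)"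
proof -
  define U :: qmat where "U = (\<chi> j i. cnj (b j $ i))"
  define V :: qmat where "V = (\<chi> i j. b j $ i)"
  have "U ** V = mat 1"
    using assms by (simp add: vec_eq_iff matrix_matrix_mult_def mat_def U_def V_def onb_def)
  then have "V ** U = mat 1" by (simp add: matrix_left_right_inverse)
  then have "(V ** U) $ i $ k = (if i = k then 1 else 0)" by (simp add: mat_def)
  then have "cnj ((V ** U) $ i $ k) = (if i = k then 1 else 0)" by simp
  moreover have "cnj ((V ** U) $ i $ k) = (\<Sum>j\<in>UNIV. cnj (b j $ i) * b j $ k)"
    by (simp add: matrix_matrix_mult_def U_def V_def)
  ultimately show ?thesis by simp
qed

lemma parseval:
  assumes b: "onb b" and u: "unit \<psi>"
  shows "(cmod (zz (b 1) \<psi>))^2 + (cmod (zz (b 2) \<psi>))^2 = 1"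
proof -
  define F where "F i k = (\<Sum>j\<in>UNIV. cnj (b j $ i) * b j $ k)" for i k
  have "zz (b 1) \<psi> * cnj (zz (b 1) \<psi>) + zz (b 2) \<psi> * cnj (zz (b 2) \<psi>)
     = \<psi>$1 * cnj (\<psi>$1) * F 1 1 + \<psi>$1 * cnj (\<psi>$2) * F 1 2 + \<psi>$2 * cnj (\<psi>$1) * F 2 1 + \<psi>$2 * cnj (\<psi>$2) * F 2 2"
    by (simp add: F_def sum_2 zz_def algebra_simps)
  also have "\<dots> = 1" using u onb_comp[OF b] by (simp add: F_def unit_def)
  finally have "of_real ((cmod (zz (b 1) \<psi>))^2 + (cmod (zz (b 2) \<psi>))^2) = (1::complex)"
    by (simp add: zz_sq)
  then show ?thesis by (simp only: of_real_eq_1_iff)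
qed



lemma psi1: "psi \<theta> s \<phi> $ 1 = of_real (s * sin (\<theta>/2)) * cis \<phi>" by (simp add: psi_def)
lemma psi2: "psi \<theta> s \<phi> $ 2 = of_real (cos (\<theta>/2))" by (simp add: psi_def)

lemma psi_unit: assumes "s^2 = 1" shows "unit (psi \<theta> s \<phi>)"
proof -
  have "(s * sin (\<theta>/2))^2 + (cos (\<theta>/2))^2 = 1" using assms by (simp add: power_mult_distrib)
  moreover have "psi \<theta> s \<phi> $ 1 * cnj (psi \<theta> s \<phi> $ 1) = of_real ((s * sin (\<theta>/2))^2)"
    unfolding complex_norm_square[symmetric] by (simp add: psi1 norm_mult power_mult_distrib)
  moreover have "psi \<theta> s \<phi> $ 2 * cnj (psi \<theta> s \<phi> $ 2) = of_real ((cos (\<theta>/2))^2)"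
    unfolding complex_norm_square[symmetric] by (simp add: psi2)
  ultimately show ?thesis unfolding unit_def
    by (metis of_real_1 of_real_add)
qed

lemma P_formula:
  assumes s: "s^2 = 1"
  shows "(cmod (zz u (psi \<theta> s \<phi>)))^2 =
     ((Re (u$2))^2 + (Im (u$2))^2) * (cos (\<theta>/2))^2 + ((Re (u$1))^2 + (Im (u$1))^2) * (sin (\<theta>/2))^2
     + 2 * cos (\<theta>/2) * sin (\<theta>/2) * s * ((Re (u$2) * Re (u$1) + Im (u$2) * Im (u$1)) * cos \<phi>
                                          - (Im (u$2) * Re (u$1) - Re (u$2) * Im (u$1)) * sin \<phi>)"
proof -
  define a1 where "a1 = Re (u$2)" define a2 where "a2 = Im (u$2)"
  define b1 where "b1 = Re (u$1)" define b2 where "b2 = Im (u$1)"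
  define c where "c = cos (\<theta>/2)" define d where "d = sin (\<theta>/2)"
  define co where "co = cos \<phi>" define si where "si = sin \<phi>"
  have cs: "co^2 + si^2 = 1" by (simp add: co_def si_def)
  have re: "Re (zz u (psi \<theta> s \<phi>)) = b1 * s * d * co + b2 * s * d * si + a1 * c"
    by (simp add: zz_def psi1 psi2 a1_def a2_def b1_def b2_def c_def d_def co_def si_def cis.code algebra_simps)
  have im: "Im (zz u (psi \<theta> s \<phi>)) = b1 * s * d * si - b2 * s * d * co - a2 * c"
    by (simp add: zz_def psi1 psi2 a1_def a2_def b1_def b2_def c_def d_def co_def si_def cis.code algebra_simps)
  have "(cmod (zz u (psi \<theta> s \<phi>)))^2 = (b1 * s * d * co + b2 * s * d * si + a1 * c)^2 + (b1 * s * d * si - b2 * s * d * co - a2 * c)^2"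
    by (simp add: cmod_power2 re im)
  also have "\<dots> = (a1^2+a2^2) * c^2 + (b1^2+b2^2) * d^2 * s^2 * (co^2 + si^2)
     + 2 * c * d * s * ((a1*b1 + a2*b2) * co - (a2*b1 - a1*b2) * si)"
    by (simp add: power2_eq_square algebra_simps)
  finally show ?thesis using s cs by (simp add: a1_def a2_def b1_def b2_def c_def d_def co_def si_def)
qed



lemma Fpoly:
  fixes x y c d s u v \<phi> :: real
  assumes s: "s^2 = 1"
  shows "(x * c^2 + y * d^2 + 2 * c * d * s * (u * cos \<phi> - v * sin \<phi>))^2 + (1 - (x * c^2 + y * d^2 + 2 * c * d * s * (u * cos \<phi> - v * sin \<phi>)))^2
    = (1 - 2 * (x * c^2 + y * d^2) + 2 * (x * c^2 + y * d^2)^2 + (2 * c * d)^2 * (u^2+v^2))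
      + ((4 * (x * c^2 + y * d^2)-2) * (2 * c * d) * s * u) * cos \<phi> + (-(4 * (x * c^2 + y * d^2)-2) * (2 * c * d) * s * v) * sin \<phi>
      + ((2 * c * d)^2 * (u^2-v^2)) * cos (2 * \<phi>) + (-2 * (2 * c * d)^2 * u * v) * sin (2 * \<phi>)"
proof -
  define K where "K = x * c^2 + y * d^2"
  define S where "S = 2 * c * d"
  define co where "co = cos \<phi>" define si where "si = sin \<phi>"
  have cs: "co^2 + si^2 = 1" by (simp add: co_def si_def)
  have c2: "cos (2 * \<phi>) = co^2 - si^2" by (simp add: co_def si_def cos_double)
  have s2: "sin (2 * \<phi>) = 2 * si * co" by (simp add: co_def si_def sin_double)
  define L where "L = S * s * (u * co - v * si)"
  have L2: "L^2 = S^2 * (u * co - v * si)^2" using s by (simp add: L_def power_mult_distrib)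
  have q: "2 * (u * co - v * si)^2 = (u^2+v^2) * (co^2+si^2) + (u^2-v^2) * (co^2-si^2) - 2 * u * v * (2 * si * co)"
    by (simp add: power2_eq_square algebra_simps)
  have "(K + L)^2 + (1 - (K + L))^2 = 1 - 2 * K + 2 * K^2 + (4 * K-2) * L + 2 * L^2"
    by (simp add: power2_eq_square algebra_simps)
  also have "2 * L^2 = S^2 * (2 * (u * co - v * si)^2)" using L2 by simp
  also have "\<dots> = S^2 * (u^2+v^2) + S^2 * (u^2-v^2) * (co^2-si^2) - 2 * S^2 * u * v * (2 * si * co)"
    unfolding q cs by (simp add: algebra_simps)
  finally show ?thesis unfolding K_def[symmetric] S_def[symmetric] co_def[symmetric] si_def[symmetric] c2 s2
    by (simp add: L_def algebra_simps)
qed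

lemma C0_simp:
  fixes x y c d :: real
  assumes "x + y = 1" "c^2 + d^2 = 1"
  shows "1 - 2 * (x * c^2 + y * d^2) + 2 * (x * c^2 + y * d^2)^2 = 1/2 + (x-y)^2 * (c^2-d^2)^2/2"
proof -
  have y: "y = 1 - x" using assms by simp
  have d: "d^2 = 1 - c^2" using assms by simp
  have "2 * (1 - 2 * (x * c^2 + (1-x) * (1-c^2)) + 2 * (x * c^2 + (1-x) * (1-c^2))^2) = 1 + (x - (1-x))^2 * (c^2 - (1-c^2))^2"
    by (simp add: power2_eq_square algebra_simps)
  then show ?thesis unfolding y d by (simp add: field_simps)
qed

lemma uv_simp: "(a1 * b1 + a2 * b2)^2 + (a2 * b1 - a1 * b2)^2 = (a1^2+a2^2) * ((b1::real)^2+b2^2)"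
  by (simp add: power2_eq_square algebra_simps)

lemma half_angle: fixes \<theta> :: real shows "cos (\<theta>/2)^2 - sin (\<theta>/2)^2 = cos \<theta>" "2 * cos (\<theta>/2) * sin (\<theta>/2) = sin \<theta>"
  "cos (\<theta>/2)^2 + sin (\<theta>/2)^2 = 1"
proof -
  show "cos (\<theta>/2)^2 - sin (\<theta>/2)^2 = cos \<theta>" using cos_double[of "\<theta>/2"] by simp
  show "2 * cos (\<theta>/2) * sin (\<theta>/2) = sin \<theta>" using sin_double[of "\<theta>/2"] by (simp add: mult.commute mult.left_commute)
  show "cos (\<theta>/2)^2 + sin (\<theta>/2)^2 = 1" by simp
qed



definition Ival :: "real \<Rightarrow> real \<Rightarrow> real \<Rightarrow> real" where
  "Ival \<theta> x y = 1/2 + (x-y)^2 * (cos \<theta>)^2 / 2 + (sin \<theta>)^2 * x * y"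

definition xb :: "(2 \<Rightarrow> qvec) \<Rightarrow> real" where "xb b = (Re (b 1 $ 2))^2 + (Im (b 1 $ 2))^2"
definition yb :: "(2 \<Rightarrow> qvec) \<Rightarrow> real" where "yb b = (Re (b 1 $ 1))^2 + (Im (b 1 $ 1))^2"

lemma p4: "(x::real)^2^2 = (x^2)^2" by (simp add: power_mult[symmetric])

lemma xy_sum: assumes "onb b" shows "xb b + yb b = 1"
proof -
  have "(\<Sum>i\<in>UNIV. cnj (b 1 $ i) * b 1 $ i) = 1" using assms by (simp add: onb_def)
  then have "cnj (b 1 $ 1) * b 1 $ 1 + cnj (b 1 $ 2) * b 1 $ 2 = 1" by (simp add: sum_2)
  then have "b 1 $ 1 * cnj (b 1 $ 1) + b 1 $ 2 * cnj (b 1 $ 2) = 1" by (simp add: mult.commute)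
  then have "of_real ((cmod (b 1 $ 1))^2 + (cmod (b 1 $ 2))^2) = (1::complex)"
    by (simp only: complex_norm_square of_real_add)
  then have "(cmod (b 1 $ 1))^2 + (cmod (b 1 $ 2))^2 = 1" by (simp only: of_real_eq_1_iff)
  then show ?thesis by (simp add: xb_def yb_def cmod_power2)
qed

lemma pointwise:
  assumes b: "onb b" and s: "s^2 = 1"
  shows "\<exists>A B C D. \<forall>\<phi>. fidelity (proj (psi \<theta> s \<phi>)) (dephase b (proj (psi \<theta> s \<phi>)))
             = Ival \<theta> (xb b) (yb b) + A * cos \<phi> + B * sin \<phi> + C * cos (2*\<phi>) + D * sin (2*\<phi>)"
proof -
  define x where "x = xb b" define y where "y = yb b"
  define c where "c = cos (\<theta>/2)" define d where "d = sin (\<theta>/2)"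
  define uu where "uu = Re (b 1 $ 2) * Re (b 1 $ 1) + Im (b 1 $ 2) * Im (b 1 $ 1)"
  define vv where "vv = Im (b 1 $ 2) * Re (b 1 $ 1) - Re (b 1 $ 2) * Im (b 1 $ 1)"
  define K where "K = x * c^2 + y * d^2"
  have xy: "x + y = 1" using xy_sum[OF b] by (simp add: x_def y_def)
  have cd: "c^2 + d^2 = 1" by (simp add: c_def d_def)
  have uv: "uu^2 + vv^2 = x * y" unfolding uu_def vv_def x_def y_def xb_def yb_def by (rule uv_simp)
  have C0: "1 - 2 * K + 2 * K^2 + (2 * c * d)^2 * (uu^2 + vv^2) = Ival \<theta> x y"
    unfolding K_def C0_simp[OF xy cd] uv
    using half_angle[of \<theta>] by (simp add: Ival_def c_def d_def)
  show ?thesis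
  proof (intro exI allI)
    fix \<phi>
    define \<psi> where "\<psi> = psi \<theta> s \<phi>"
    have u: "unit \<psi>" using psi_unit[OF s] by (simp add: \<psi>_def)
    define P where "P = (cmod (zz (b 1) \<psi>))^2"
    have P2: "(cmod (zz (b 2) \<psi>))^2 = 1 - P" using parseval[OF b u] by (simp add: P_def)
    have Pf: "P = x * c^2 + y * d^2 + 2 * c * d * s * (uu * cos \<phi> - vv * sin \<phi>)"
      unfolding P_def \<psi>_def P_formula[OF s] by (simp add: x_def y_def xb_def yb_def c_def d_def uu_def vv_def)
    have "fidelity (proj \<psi>) (dephase b (proj \<psi>)) = P^2 + (1-P)^2"
      using fid_proj[OF u, of b] unfolding p4 P2 P_def[symmetric] .
    also have "\<dots> = Ival \<theta> x y
      + ((4 * K-2) * (2 * c * d) * s * uu) * cos \<phi> + (-(4 * K-2) * (2 * c * d) * s * vv) * sin \<phi>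
      + ((2 * c * d)^2 * (uu^2-vv^2)) * cos (2 * \<phi>) + (-2 * (2 * c * d)^2 * uu * vv) * sin (2 * \<phi>)"
      unfolding Pf using Fpoly[where x=x and y=y and c=c and d=d and u=uu and v=vv and \<phi>=\<phi>, OF s] unfolding K_def[symmetric] C0 .
    finally show "fidelity (proj (psi \<theta> s \<phi>)) (dephase b (proj (psi \<theta> s \<phi>)))
        = Ival \<theta> (xb b) (yb b) + ((4 * K-2) * (2 * c * d) * s * uu) * cos \<phi> + (-(4 * K-2) * (2 * c * d) * s * vv) * sin \<phi>
      + ((2 * c * d)^2 * (uu^2-vv^2)) * cos (2 * \<phi>) + (-2 * (2 * c * d)^2 * uu * vv) * sin (2 * \<phi>)"
      by (simp add: \<psi>_def x_def y_def)
  qed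
qed



abbreviation "MM \<equiv> measure_pmf (pmf_of_set {1, -1::real})"
abbreviation "NN \<equiv> uniform_measure lborel {0..<2*pi}"

lemma NN_prob: "prob_space NN"
  by (rule prob_space_uniform_measure) auto

lemma T_meas: "(\<lambda>(s, \<phi>). proj (psi \<theta> s \<phi>)) \<in> borel_measurable (MM \<Otimes>\<^sub>M NN)"
proof -
  have f: "fst \<in> borel_measurable (MM \<Otimes>\<^sub>M NN)"
    by (rule measurable_compose[OF measurable_fst]) simp
  have g: "snd \<in> borel_measurable (MM \<Otimes>\<^sub>M NN)"
    by (rule measurable_compose[OF measurable_snd]) (simp add: measurable_ident_sets)
  have ci: "continuous_on UNIV (\<lambda>x::real\<times>real. psi \<theta> (fst x) (snd x) $ i)" for i
    by (cases "i = 0") (simp_all add: psi_def, (intro continuous_intros)+)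
  have c: "continuous_on UNIV (\<lambda>x::real\<times>real. proj (psi \<theta> (fst x) (snd x)))"
    unfolding proj_def by (intro continuous_intros ci)
  show ?thesis using borel_measurable_continuous_Pair[OF f g c] by (simp add: case_prod_beta)
qed

lemma fid_nonneg: "fidelity \<rho> \<sigma> \<ge> 0" by (simp add: fidelity_def)

lemma integral_ens:
  assumes b: "onb b"
  shows "(\<integral>\<rho>. fidelity \<rho> (dephase b \<rho>) \<partial>ens \<theta>) = Ival \<theta> (xb b) (yb b)"
proof -
  interpret N: prob_space NN by (rule NN_prob)
  define I where "I = Ival \<theta> (xb b) (yb b)"
  have I0: "I \<ge> 0" using xy_sum[OF b]
    by (simp add: I_def Ival_def xb_def yb_def)
  note hm = h_meas[of b]
  note Tm = T_meas[of \<theta>]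
  have hTm: "(\<lambda>x. ennreal (fidelity (case x of (s, \<phi>) \<Rightarrow> proj (psi \<theta> s \<phi>)) (dephase b (case x of (s, \<phi>) \<Rightarrow> proj (psi \<theta> s \<phi>))))) \<in> borel_measurable (MM \<Otimes>\<^sub>M NN)"
    using measurable_compose[OF Tm hm] by (simp add: comp_def)
  have inner: "(\<integral>\<^sup>+\<phi>. ennreal (fidelity (proj (psi \<theta> s \<phi>)) (dephase b (proj (psi \<theta> s \<phi>)))) \<partial>NN) = ennreal I"
    if "s \<in> {1, -1}" for s
  proof -
    have s2: "s^2 = 1" using that by auto
    obtain A B C D where e: "\<And>\<phi>. fidelity (proj (psi \<theta> s \<phi>)) (dephase b (proj (psi \<theta> s \<phi>)))
             = I + A * cos \<phi> + B * sin \<phi> + C * cos (2*\<phi>) + D * sin (2*\<phi>)"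
      using pointwise[OF b s2, of \<theta>] unfolding I_def by blast
    have nn: "0 \<le> I + A * cos \<phi> + B * sin \<phi> + C * cos (2*\<phi>) + D * sin (2*\<phi>)" for \<phi>
      using fid_nonneg e by metis
    show ?thesis unfolding e by (rule trig_nn[OF nn])
  qed
  have "(\<integral>\<^sup>+\<rho>. ennreal (fidelity \<rho> (dephase b \<rho>)) \<partial>ens \<theta>)
      = (\<integral>\<^sup>+x. ennreal (fidelity (case x of (s, \<phi>) \<Rightarrow> proj (psi \<theta> s \<phi>)) (dephase b (case x of (s, \<phi>) \<Rightarrow> proj (psi \<theta> s \<phi>)))) \<partial>(MM \<Otimes>\<^sub>M NN))"
    unfolding ens_def by (rule nn_integral_distr[OF Tm]) (use hm in measurable)
  also have "\<dots> = (\<integral>\<^sup>+s. \<integral>\<^sup>+\<phi>. ennreal (fidelity (proj (psi \<theta> s \<phi>)) (dephase b (proj (psi \<theta> s \<phi>)))) \<partial>NN \<partial>MM)"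
    using N.nn_integral_fst[OF hTm] by simp
  also have "\<dots> = (\<integral>\<^sup>+s. ennreal I \<partial>MM)"
    by (rule nn_integral_cong_AE) (auto simp: AE_measure_pmf_iff inner)
  also have "\<dots> = ennreal I" by (simp add: measure_pmf.emeasure_space_1)
  finally have nn: "(\<integral>\<^sup>+\<rho>. ennreal (fidelity \<rho> (dephase b \<rho>)) \<partial>ens \<theta>) = ennreal I" .
  have "has_bochner_integral (ens \<theta>) (\<lambda>\<rho>. fidelity \<rho> (dephase b \<rho>)) I"
  proof (rule has_bochner_integral_nn_integral[OF _ _ I0 nn])
    show "(\<lambda>\<rho>. fidelity \<rho> (dephase b \<rho>)) \<in> borel_measurable (ens \<theta>)"
      using hm unfolding ens_def by simp
    show "AE x in ens \<theta>. 0 \<le> fidelity x (dephase b x)" by (simp add: fid_nonneg)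
  qed
  then show ?thesis by (simp add: has_bochner_integral_integral_eq I_def)
qed



definition bstd :: "2 \<Rightarrow> qvec" where "bstd j = (if j = 1 then v2 0 1 else v2 1 0)"
definition hh :: complex where "hh = of_real (sqrt (1/2))"
lemma hh_sq: "hh * hh = 1/2" unfolding hh_def by (simp flip: of_real_mult)
lemma hh_cnj[simp]: "cnj hh = hh" unfolding hh_def by simp
lemma hh_Re: "(Re hh)^2 = 1/2" unfolding hh_def by simp
lemma hh_Im[simp]: "Im hh = 0" unfolding hh_def by simp

definition bhad :: "2 \<Rightarrow> qvec" where
  "bhad j = (if j = 1 then v2 hh hh else v2 hh (- hh))"

lemma onb_std: "onb bstd"
  unfolding onb_def by (simp add: forall_2 sum_2 bstd_def)

lemma onb_had: "onb bhad"
  unfolding onb_def by (simp add: forall_2 sum_2 bhad_def hh_sq)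

lemma Ival_le:
  assumes "x \<ge> 0" "y \<ge> 0" "x + y = 1"
  shows "Ival \<theta> x y \<le> max (1 - (sin \<theta>)^2/2) (1/2 + (sin \<theta>)^2/4)"
proof -
  define t where "t = 4*(x*y)"
  have t: "0 \<le> t" "t \<le> 1"
  proof -
    show "0 \<le> t" using assms by (simp add: t_def)
    have "(x-y)*(x-y) \<ge> 0" by simp
    moreover have "(x-y)*(x-y) = x*x + y*y - 2*(x*y)" by (simp add: algebra_simps)
    moreover have "(x+y)*(x+y) = x*x + y*y + 2*(x*y)" by (simp add: algebra_simps)
    moreover have "(x+y)*(x+y) = 1" using assms by simp
    ultimately show "t \<le> 1" unfolding t_def by linarith
  qed
  have xy: "(x-y)^2 = 1 - t"
  proof -
    have "(x-y)^2 = (x+y)^2 - 4*(x*y)" by (simp add: power2_eq_square algebra_simps)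
    then show ?thesis using assms(3) by (simp add: t_def)
  qed
  have c: "(cos \<theta>)^2 = 1 - (sin \<theta>)^2" by (simp add: cos_squared_eq)
  have "Ival \<theta> x y = (1-t) * (1 - (sin \<theta>)^2/2) + t * (1/2 + (sin \<theta>)^2/4)"
    unfolding Ival_def xy c by (simp add: t_def field_simps)
  also have "\<dots> \<le> (1-t) * max (1 - (sin \<theta>)^2/2) (1/2 + (sin \<theta>)^2/4) + t * max (1 - (sin \<theta>)^2/2) (1/2 + (sin \<theta>)^2/4)"
    using t by (intro add_mono mult_left_mono) auto
  finally show ?thesis by (simp add: algebra_simps)
qed

lemma ECCC_max: "ECCC (ens \<theta>) = max (1 - (sin \<theta>)^2/2) (1/2 + (sin \<theta>)^2/4)"
proof -
  have eq: "ECCC (ens \<theta>) = Sup ((\<lambda>b. Ival \<theta> (xb b) (yb b)) ` {b. onb b})"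
    unfolding ECCC_def by (rule arg_cong[where f=Sup], rule image_cong) (simp_all add: integral_ens)
  have c: "(cos \<theta>)^2 = 1 - (sin \<theta>)^2" by (simp add: cos_squared_eq)
  have vs: "Ival \<theta> (xb bstd) (yb bstd) = 1 - (sin \<theta>)^2/2"
    by (simp add: Ival_def xb_def yb_def bstd_def c field_simps)
  have vh: "Ival \<theta> (xb bhad) (yb bhad) = 1/2 + (sin \<theta>)^2/4"
    by (simp add: Ival_def xb_def yb_def bhad_def hh_Re)
  show ?thesis unfolding eq
  proof (rule cSup_eq_maximum)
    show "max (1 - (sin \<theta>)^2/2) (1/2 + (sin \<theta>)^2/4) \<in> (\<lambda>b. Ival \<theta> (xb b) (yb b)) ` {b. onb b}"
    proof -
      have m1: "1 - (sin \<theta>)^2/2 \<in> (\<lambda>b. Ival \<theta> (xb b) (yb b)) ` {b. onb b}"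
        by (rule rev_image_eqI[of bstd]) (simp_all add: onb_std vs)
      have m2: "1/2 + (sin \<theta>)^2/4 \<in> (\<lambda>b. Ival \<theta> (xb b) (yb b)) ` {b. onb b}"
        by (rule rev_image_eqI[of bhad]) (simp_all add: onb_had vh)
      show ?thesis using m1 m2 by (simp add: max_def)
    qed
  next
    fix z assume "z \<in> (\<lambda>b. Ival \<theta> (xb b) (yb b)) ` {b. onb b}"
    then obtain b where b: "onb b" and z: "z = Ival \<theta> (xb b) (yb b)" by auto
    show "z \<le> max (1 - (sin \<theta>)^2/2) (1/2 + (sin \<theta>)^2/4)"
      unfolding z by (rule Ival_le) (use xy_sum[OF b] in \<open>auto simp: xb_def yb_def\<close>)
  qed
qed



lemma le_sqrt_iff: "0 \<le> (x::real) \<Longrightarrow> 0 \<le> a \<Longrightarrow> (x \<le> sqrt a \<longleftrightarrow> x^2 \<le> a)"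
proof -
  assume x: "0 \<le> x" and a: "0 \<le> a"
  have "x = sqrt (x^2)" using x by simp
  then have "(x \<le> sqrt a) = (sqrt (x^2) \<le> sqrt a)" by simp
  also have "\<dots> = (x^2 \<le> a)" by (rule real_sqrt_le_iff)
  finally show ?thesis .
qed

theorem mainTheorem7:
  shows "(\<forall>\<theta>\<in>{0..pi}. ECCC (ens \<theta>) =
            (if sin \<theta> \<le> sqrt (2/3) then 1 - (sin \<theta>)^2 / 2 else 1/2 + (sin \<theta>)^2 / 4))
       \<and> (\<forall>\<theta>\<in>{0..pi}. ECCC (ens \<theta>) \<ge> 2/3)
       \<and> (\<forall>\<theta>\<in>{0..pi}. sin \<theta> = sqrt (2/3) \<longrightarrow> ECCC (ens \<theta>) = 2/3)
       \<and> ECCC (ens (pi/2)) = 3/4"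
proof (intro conjI ballI impI)
  fix \<theta> :: real assume th: "\<theta> \<in> {0..pi}"
  then have s0: "sin \<theta> \<ge> 0" by (auto intro: sin_ge_zero)
  have iff: "sin \<theta> \<le> sqrt (2/3) \<longleftrightarrow> (sin \<theta>)^2 \<le> 2/3" by (rule le_sqrt_iff[OF s0]) simp
  show "ECCC (ens \<theta>) = (if sin \<theta> \<le> sqrt (2/3) then 1 - (sin \<theta>)^2 / 2 else 1/2 + (sin \<theta>)^2 / 4)"
    unfolding ECCC_max iff by (auto simp: max_def)
next
  fix \<theta> :: real assume th: "\<theta> \<in> {0..pi}"
  show "ECCC (ens \<theta>) \<ge> 2/3"
    unfolding ECCC_max by (cases "(sin \<theta>)^2 \<le> 2/3") (auto simp: max_def)
next
  fix \<theta> :: real assume th: "\<theta> \<in> {0..pi}" and e: "sin \<theta> = sqrt (2/3)"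
  then have "(sin \<theta>)^2 = 2/3" by simp
  then show "ECCC (ens \<theta>) = 2/3" unfolding ECCC_max by (simp add: max_def)
next
  show "ECCC (ens (pi/2)) = 3/4" unfolding ECCC_max by (simp add: max_def)
qed


end
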